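(* $R^p(3)=\tfrac12$ and $R(4)=\tfrac13$.
   Context: A qubit POVM is a finite family $\{\Pi_i\}_{i=1}^n$ of positive semidefinite operators summing to $\mathbb{I}$; it simulates a family $\{M_{a|x}\}$ if $M_{a|x}=\sum_i p(a|x,i)\Pi_i$ with $p(a|x,i)\ge0$, $\sum_a p(a|x,i)=1$. $\mathcal{P}_r$ is the family of two-outcome POVMs $\{\tfrac12(\mathbb{I}\pm r\hat n\cdot\vec\sigma)\}$ over all unit $\hat n\in\mathbb{R}^3$, and $\mathcal{P}^p_r$ the subfamily with $\hat n=(n_x,0,n_z)$. $R(n)$ (resp. $R^p(n)$) is the supremum of $r$ such that some $n$-outcome qubit POVM simulates $\mathcal{P}_r$ (resp. $\mathcal{P}^p_r$). *)

theory Defs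
  imports "HOL-Analysis.Analysis"
begin

type_synonym qop = "complex ^ 2 ^ 2"

definition sigma_x :: qop where
  "sigma_x = (\<chi> i j. if i = j then 0 else 1)"
definition sigma_y :: qop where
  "sigma_y = (\<chi> i j. if i = j then 0 else if i = 1 then - \<i> else \<i>)"
definition sigma_z :: qop where
  "sigma_z = (\<chi> i j. if i \<noteq> j then 0 else if i = 1 then 1 else -1)"

definition pauli_dot :: "real ^ 3 \<Rightarrow> qop" where
  "pauli_dot v = v$1 *\<^sub>R sigma_x + v$2 *\<^sub>R sigma_y + v$3 *\<^sub>R sigma_z"

definition psd :: "qop \<Rightarrow> bool" where
  "psd A \<longleftrightarrow> (\<forall>v :: complex ^ 2.
      Im (\<Sum>i\<in>UNIV. cnj (v$i) * (A *v v)$i) = 0 \<and>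
      Re (\<Sum>i\<in>UNIV. cnj (v$i) * (A *v v)$i) \<ge> 0)"

definition povm :: "nat \<Rightarrow> (nat \<Rightarrow> qop) \<Rightarrow> bool" where
  "povm n P \<longleftrightarrow> (\<forall>i<n. psd (P i)) \<and> (\<Sum>i<n. P i) = mat 1"

definition simulates :: "nat \<Rightarrow> (nat \<Rightarrow> qop) \<Rightarrow> 'a set \<Rightarrow> 'x set \<Rightarrow> ('a \<Rightarrow> 'x \<Rightarrow> qop) \<Rightarrow> bool" where
  "simulates n P A X M \<longleftrightarrow> (\<exists>p :: 'a \<Rightarrow> 'x \<Rightarrow> nat \<Rightarrow> real.
      (\<forall>x\<in>X. \<forall>i<n. (\<forall>a\<in>A. p a x i \<ge> 0) \<and> (\<Sum>a\<in>A. p a x i) = 1) \<and>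
      (\<forall>x\<in>X. \<forall>a\<in>A. M a x = (\<Sum>i<n. p a x i *\<^sub>R P i)))"

definition noisy_meas :: "real \<Rightarrow> bool \<Rightarrow> real ^ 3 \<Rightarrow> qop" where
  "noisy_meas r a v = (1/2 :: real) *\<^sub>R (mat 1 + (if a then r else - r) *\<^sub>R pauli_dot v)"

definition all_dirs :: "(real ^ 3) set" where
  "all_dirs = {v. norm v = 1}"

definition planar_dirs :: "(real ^ 3) set" where
  "planar_dirs = {v. norm v = 1 \<and> v$2 = 0}"

definition R :: "nat \<Rightarrow> real" where
  "R n = Sup {r. r \<ge> 0 \<and> (\<exists>P. povm n P \<and> simulates n P UNIV all_dirs (noisy_meas r))}"

definition Rp :: "nat \<Rightarrow> real" where
  "Rp n = Sup {r. r \<ge> 0 \<and> (\<exists>P. povm n P \<and> simulates n P UNIV planar_dirs (noisy_meas r))}"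

end

theory Submission
  imports Defs
begin

lemma qop_eq: "(A::qop) = B \<longleftrightarrow> A$1$1 = B$1$1 \<and> A$1$2 = B$1$2 \<and> A$2$1 = B$2$1 \<and> A$2$2 = B$2$2"
  by (auto simp: vec_eq_iff forall_2)
lemma pd_ent: "pauli_dot w $1$1 = of_real (w$3)" "pauli_dot w $2$2 = - of_real (w$3)"
  "pauli_dot w $1$2 = Complex (w$1) (- w$2)" "pauli_dot w $2$1 = Complex (w$1) (w$2)"
  by (simp_all add: pauli_dot_def sigma_x_def sigma_y_def sigma_z_def complex_eq_iff)
lemma mat1_ent: "(mat 1 :: qop)$1$1 = 1" "(mat 1 :: qop)$2$2 = 1" "(mat 1 :: qop)$1$2 = 0" "(mat 1 :: qop)$2$1 = 0"
  by (simp_all add: mat_def)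

lemma qf_real: fixes a d br bi p q uu ww :: real shows
 "cnj (Complex p q) * (of_real a * Complex p q + Complex br bi * Complex uu ww) + cnj (Complex uu ww) * (cnj (Complex br bi) * Complex p q + of_real d * Complex uu ww)
  = of_real (a*(p^2+q^2) + d*(uu^2+ww^2) + 2*(br*(p*uu + q*ww) - bi*(p*ww - q*uu)))"
  apply (simp add: complex_eq_iff)
  apply (intro conjI)
  by algebra+

lemma quad_form: "(\<Sum>i\<in>UNIV. cnj (v$i) * ((A::qop) *v v)$i) =
   cnj (v$1) * (A$1$1 * v$1 + A$1$2 * v$2) + cnj (v$2) * (A$2$1 * v$1 + A$2$2 * v$2)"
  by (simp add: sum_2 matrix_vector_mult_def)
lemma X: fixes v :: "complex^2" shows True
proof -
  obtain p q where v1: "v$1 = Complex p q" by (meson complex.exhaust_sel)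
  show True by simp
qed
lemma psd_herm:
  assumes "A$1$1 = of_real a" "A$2$2 = of_real d" "A$2$1 = cnj (A$1$2)" "a \<ge> 0" "d \<ge> 0"
    "(Re (A$1$2))^2 + (Im (A$1$2))^2 \<le> a*d"
  shows "psd A"
  unfolding psd_def quad_form
proof
  fix v :: "complex^2"
  obtain p q where v1: "v$1 = Complex p q" by (meson complex.exhaust_sel)
  obtain uu ww where v2: "v$2 = Complex uu ww" by (meson complex.exhaust_sel)
  obtain br bi where b: "A$1$2 = Complex br bi" by (meson complex.exhaust_sel)
  define E where "E = a*(p^2+q^2) + d*(uu^2+ww^2) + 2*(br*(p*uu + q*ww) - bi*(p*ww - q*uu))"
  have h6: "br^2 + bi^2 \<le> a*d" using assms(6) b by simp
  have eq: "cnj (v$1) * (A$1$1 * v$1 + A$1$2 * v$2) + cnj (v$2) * (A$2$1 * v$1 + A$2$2 * v$2) = of_real E"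
    unfolding assms(3) unfolding assms(1,2) v1 v2 b E_def by (rule qf_real)
  have key: "a * E = (a*p + br*uu - bi*ww)^2 + (a*q + br*ww + bi*uu)^2 + (a*d - br^2 - bi^2)*(uu^2+ww^2)"
    unfolding E_def by algebra
  have "E \<ge> 0"
  proof (cases "a > 0")
    case True
    have n3: "(a*d - br^2 - bi^2)*(uu^2+ww^2) \<ge> 0" using h6 by simp
    have "a * E \<ge> 0" unfolding key using n3 by (simp only: add_nonneg_nonneg zero_le_power2)
    then show ?thesis using True by (simp add: zero_le_mult_iff)
  next
    case False
    then have "a = 0" using assms(4) by simp
    then have "br^2 + bi^2 \<le> 0" using h6 by simp
    then have "br = 0 \<and> bi = 0" by (simp only: sum_power2_le_zero_iff)
    then show ?thesis unfolding E_def using \<open>a = 0\<close> assms(5) by simp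
  qed
  then show "Im (cnj (v$1) * (A$1$1 * v$1 + A$1$2 * v$2) + cnj (v$2) * (A$2$1 * v$1 + A$2$2 * v$2)) = 0 \<and>
    0 \<le> Re (cnj (v$1) * (A$1$1 * v$1 + A$1$2 * v$2) + cnj (v$2) * (A$2$1 * v$1 + A$2$2 * v$2))"
    unfolding eq by simp
qed

lemma psd_test: "psd A \<Longrightarrow> Im (\<Sum>i\<in>UNIV. cnj (v$i) * ((A::qop) *v v)$i) = 0 \<and> Re (\<Sum>i\<in>UNIV. cnj (v$i) * (A *v v)$i) \<ge> 0"
  unfolding psd_def by blast

lemma psd_props:
  assumes "psd A"
  shows "Im (A$1$1) = 0" "Im (A$2$2) = 0" "A$2$1 = cnj (A$1$2)" "Re (A$1$1) \<ge> 0" "Re (A$2$2) \<ge> 0"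
    "(Re (A$1$2))^2 + (Im (A$1$2))^2 \<le> Re (A$1$1) * Re (A$2$2)"
proof -
  have ww: "\<And>v1 v2. Im (cnj v1 * (A$1$1 * v1 + A$1$2 * v2) + cnj v2 * (A$2$1 * v1 + A$2$2 * v2)) = 0 \<and>
     Re (cnj v1 * (A$1$1 * v1 + A$1$2 * v2) + cnj v2 * (A$2$1 * v1 + A$2$2 * v2)) \<ge> 0"
  proof -
    fix v1 v2
    have "Im (\<Sum>i\<in>UNIV. cnj ((vector [v1,v2]::complex^2)$i) * (A *v vector [v1,v2])$i) = 0 \<and>
       Re (\<Sum>i\<in>UNIV. cnj ((vector [v1,v2]::complex^2)$i) * (A *v vector [v1,v2])$i) \<ge> 0"
      using psd_test[OF assms] by blast
    then show "?thesis v1 v2" unfolding quad_form by simp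
  qed
  from ww[of 1 0] show a1: "Im (A$1$1) = 0" "Re (A$1$1) \<ge> 0" by auto
  from ww[of 0 1] show a2: "Im (A$2$2) = 0" "Re (A$2$2) \<ge> 0" by auto
  from ww[of 1 1] have h1: "Im (A$1$2) + Im (A$2$1) = 0" using a1 a2 by simp
  from ww[of 1 \<i>] have h2: "Re (A$1$2) - Re (A$2$1) = 0" using a1 a2 by simp
  show herm: "A$2$1 = cnj (A$1$2)" using h1 h2 by (simp add: complex_eq_iff)
  obtain br bi where b: "A$1$2 = Complex br bi" by (meson complex.exhaust_sel)
  define a where "a = Re (A$1$1)"
  define d where "d = Re (A$2$2)"
  have A11: "A$1$1 = of_real a" using a1 unfolding a_def by (simp add: complex_eq_iff)
  have A22: "A$2$2 = of_real d" using a2 unfolding d_def by (simp add: complex_eq_iff)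
  have Q: "\<And>p q uu ww. Re (cnj (Complex p q) * (A$1$1 * Complex p q + A$1$2 * Complex uu ww) + cnj (Complex uu ww) * (A$2$1 * Complex p q + A$2$2 * Complex uu ww))
     = a*(p^2+q^2) + d*(uu^2+ww^2) + 2*(br*(p*uu + q*ww) - bi*(p*ww - q*uu))"
    unfolding herm unfolding A11 A22 b qf_real by (simp only: Re_complex_of_real)
  have Qn: "\<And>p q uu ww. a*(p^2+q^2) + d*(uu^2+ww^2) + 2*(br*(p*uu + q*ww) - bi*(p*ww - q*uu)) \<ge> 0"
    using ww Q by metis
  have "br^2 + bi^2 \<le> a*d"
  proof (cases "a > 0")
    case True
    from Qn[of br bi "-a" 0] have "a*(br^2+bi^2) + d*a^2 - 2*a*(br^2+bi^2) \<ge> 0"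
      by (simp add: power2_eq_square algebra_simps)
    then have "a * (a*d - (br^2+bi^2)) \<ge> 0" by (simp add: algebra_simps power2_eq_square)
    then show ?thesis using True by (simp add: zero_le_mult_iff)
  next
    case False
    then have a0: "a = 0" using a1 a_def by simp
    show ?thesis
    proof (rule ccontr)
      assume "\<not> ?thesis"
      then have bb: "br^2 + bi^2 > 0" using a0 by simp
      define B where "B = br^2+bi^2"
      define k where "k = 1/(d+1)"
      define uu where "uu = - B * k"
      have "d \<ge> 0" using a2 d_def by simp
      have kp: "k > 0" unfolding k_def using \<open>d \<ge> 0\<close> by simp
      have dk: "d*k \<le> 1" unfolding k_def using \<open>d \<ge> 0\<close> by simp
      from Qn[of br bi uu 0] a0 have "d*uu^2 + 2*uu*B \<ge> 0"
        unfolding B_def by (simp add: power2_eq_square algebra_simps)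
      moreover have "d*uu^2 + 2*uu*B = uu * (d*uu + 2*B)" by (simp add: algebra_simps power2_eq_square)
      moreover have "uu < 0" proof - have "B * k > 0" using bb kp B_def by simp then show ?thesis unfolding uu_def by simp qed
      moreover have "d*uu + 2*B > 0"
      proof -
        have "d*uu = - (B * (d*k))" unfolding uu_def by algebra
        moreover have "B * (d*k) \<le> B" using bb dk B_def mult_left_le[of "d*k" B] by simp
        ultimately show ?thesis using bb B_def by linarith
      qed
      ultimately show False by (metis mult_neg_pos not_le)
    qed
  qed
  then show "(Re (A$1$2))^2 + (Im (A$1$2))^2 \<le> Re (A$1$1) * Re (A$2$2)" using b a_def d_def by simp
qed


lemma cs3: fixes a b c x y z :: real
  shows "(a*x+b*y+c*z)^2 \<le> (a^2+b^2+c^2)*(x^2+y^2+z^2)"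
proof -
  have "(a^2+b^2+c^2)*(x^2+y^2+z^2) - (a*x+b*y+c*z)^2 = (a*y-b*x)^2 + (a*z-c*x)^2 + (b*z-c*y)^2"
    by algebra
  moreover have "(a*y-b*x)^2 + (a*z-c*x)^2 + (b*z-c*y)^2 \<ge> 0" by simp
  ultimately show ?thesis by linarith
qed

lemma scale_big: fixes n1 n2 n3 :: real and K :: real
  assumes "n1^2+n2^2+n3^2 > 0" "K \<ge> 0"
  shows "\<exists>t. (t*n1)^2+(t*n2)^2+(t*n3)^2 \<ge> K"
proof -
  define N where "N = n1^2+n2^2+n3^2"
  define t where "t = 1 + K/N"
  have "(t*n1)^2+(t*n2)^2+(t*n3)^2 = t*(t*N)" unfolding N_def by algebra
  also have "t*N = N + K" unfolding t_def using assms(1) N_def by (simp add: field_simps)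
  also have "t*(N+K) \<ge> N + K" using assms N_def unfolding t_def by (simp add: field_simps)
  finally show ?thesis using assms N_def by (intro exI[of _ t]) linarith
qed

lemma perp3:
  fixes x1 y1 z1 x2 y2 z2 x3 y3 z3 :: real
  assumes D: "x1*(y2*z3 - z2*y3) + y1*(z2*x3 - x2*z3) + z1*(x2*y3 - y2*x3) = 0"
  shows "\<exists>n1 n2 n3. n1^2+n2^2+n3^2 > 0 \<and> n1*x1+n2*y1+n3*z1 = 0 \<and> n1*x2+n2*y2+n3*z2 = 0 \<and> n1*x3+n2*y3+n3*z3 = 0"
proof -
  let ?P = "\<lambda>n1 n2 n3. n1^2+n2^2+n3^2 > 0 \<and> n1*x1+n2*y1+n3*z1 = 0 \<and> n1*x2+n2*y2+n3*z2 = 0 \<and> n1*x3+n2*y3+n3*z3 = 0"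
  have nz: "\<And>a b c::real. a \<noteq> 0 \<or> b \<noteq> 0 \<or> c \<noteq> 0 \<Longrightarrow> a^2+b^2+c^2 > 0"
    by (metis add_nonneg_nonneg add_pos_nonneg add_nonneg_pos zero_le_power2 zero_less_power2)
  show ?thesis
  proof (cases "y2*z3 - z2*y3 \<noteq> 0 \<or> z2*x3 - x2*z3 \<noteq> 0 \<or> x2*y3 - y2*x3 \<noteq> 0")
    case True
    have "?P (y2*z3 - z2*y3) (z2*x3 - x2*z3) (x2*y3 - y2*x3)"
      using nz[OF True] D by (intro conjI) (auto simp: algebra_simps)
    then show ?thesis by blast
  next
    case F1: False
    show ?thesis
    proof (cases "y3*z1 - z3*y1 \<noteq> 0 \<or> z3*x1 - x3*z1 \<noteq> 0 \<or> x3*y1 - y3*x1 \<noteq> 0")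
      case True
      have "?P (y3*z1 - z3*y1) (z3*x1 - x3*z1) (x3*y1 - y3*x1)"
        using nz[OF True] D by (intro conjI) (auto simp: algebra_simps)
      then show ?thesis by blast
    next
      case F2: False
      show ?thesis
      proof (cases "y1*z2 - z1*y2 \<noteq> 0 \<or> z1*x2 - x1*z2 \<noteq> 0 \<or> x1*y2 - y1*x2 \<noteq> 0")
        case True
        have "?P (y1*z2 - z1*y2) (z1*x2 - x1*z2) (x1*y2 - y1*x2)"
          using nz[OF True] D by (intro conjI) (auto simp: algebra_simps)
        then show ?thesis by blast
      next
        case F3: False
        have c: "y2*z3 = z2*y3" "z2*x3 = x2*z3" "x2*y3 = y2*x3" "y3*z1 = z3*y1" "z3*x1 = x3*z1" "x3*y1 = y3*x1"
          "y1*z2 = z1*y2" "z1*x2 = x1*z2" "x1*y2 = y1*x2" using F1 F2 F3 by auto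
        consider "z1 \<noteq> 0 \<or> y1 \<noteq> 0" | "x1 \<noteq> 0" | "z2 \<noteq> 0 \<or> y2 \<noteq> 0" | "x2 \<noteq> 0"
          | "z3 \<noteq> 0 \<or> y3 \<noteq> 0" | "x3 \<noteq> 0" | "x1 = 0 \<and> y1 = 0 \<and> z1 = 0 \<and> x2 = 0 \<and> y2 = 0 \<and> z2 = 0 \<and> x3 = 0 \<and> y3 = 0 \<and> z3 = 0"
          by blast
        then show ?thesis
        proof cases
          case 1
          have "?P 0 z1 (-y1)" using nz[of 0 z1 "-y1"] 1 c by (auto simp: algebra_simps)
          then show ?thesis by blast
        next
          case 2
          have "?P (-z1) 0 x1" using nz[of "-z1" 0 x1] 2 c by (auto simp: algebra_simps)
          then show ?thesis by blast
        next
          case 3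
          have "?P 0 z2 (-y2)" using nz[of 0 z2 "-y2"] 3 c by (auto simp: algebra_simps)
          then show ?thesis by blast
        next
          case 4
          have "?P (-z2) 0 x2" using nz[of "-z2" 0 x2] 4 c by (auto simp: algebra_simps)
          then show ?thesis by blast
        next
          case 5
          have "?P 0 z3 (-y3)" using nz[of 0 z3 "-y3"] 5 c by (auto simp: algebra_simps)
          then show ?thesis by blast
        next
          case 6
          have "?P (-z3) 0 x3" using nz[of "-z3" 0 x3] 6 c by (auto simp: algebra_simps)
          then show ?thesis by blast
        next
          case 7
          have "?P 1 0 0" using 7 by simp
          then show ?thesis by blast
        qed
      qed
    qed
  qed
qed


lemma core3:
  fixes a1 a2 a3 a4 x1 y1 z1 x2 y2 z2 x3 y3 z3 x4 y4 z4 :: real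
  assumes s: "a1+a2+a3+a4 = 1" "x1+x2+x3+x4 = 0" "y1+y2+y3+y4 = 0" "z1+z2+z3+z4 = 0"
    and n: "x1^2+y1^2+z1^2 \<le> a1^2" "x2^2+y2^2+z2^2 \<le> a2^2" "x3^2+y3^2+z3^2 \<le> a3^2" "x4^2+y4^2+z4^2 \<le> a4^2"
    and p: "a1 \<ge> 0" "a2 \<ge> 0" "a3 \<ge> 0" "a4 \<ge> 0" and sm: "a4 \<le> 1/4"
  shows "\<exists>Y1 Y2 Y3. Y1^2+Y2^2+Y3^2 \<ge> 9 \<and> a1 + Y1*x1+Y2*y1+Y3*z1 \<ge> 0 \<and> a2 + Y1*x2+Y2*y2+Y3*z2 \<ge> 0
     \<and> a3 + Y1*x3+Y2*y3+Y3*z3 \<ge> 0 \<and> a4 + Y1*x4+Y2*y4+Y3*z4 \<ge> 0"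
proof -
  have w4: "x4 = -(x1+x2+x3)" "y4 = -(y1+y2+y3)" "z4 = -(z1+z2+z3)" using s by linarith+
  define D where "D = x1*(y2*z3 - z2*y3) + y1*(z2*x3 - x2*z3) + z1*(x2*y3 - y2*x3)"
  show ?thesis
  proof (cases "D = 0")
    case True
    then obtain n1 n2 n3 where nn: "n1^2+n2^2+n3^2 > 0" "n1*x1+n2*y1+n3*z1 = 0" "n1*x2+n2*y2+n3*z2 = 0" "n1*x3+n2*y3+n3*z3 = 0"
      using perp3 unfolding D_def by blast
    obtain t where t: "(t*n1)^2+(t*n2)^2+(t*n3)^2 \<ge> 9" using scale_big[OF nn(1), of 9] by auto
    have e1: "(t*n1)*x1+(t*n2)*y1+(t*n3)*z1 = 0" using nn(2) by algebra
    have e2: "(t*n1)*x2+(t*n2)*y2+(t*n3)*z2 = 0" using nn(3) by algebra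
    have e3: "(t*n1)*x3+(t*n2)*y3+(t*n3)*z3 = 0" using nn(4) by algebra
    have e4: "(t*n1)*x4+(t*n2)*y4+(t*n3)*z4 = 0" using nn(2-4) w4 by algebra
    note e = e1 e2 e3 e4
    show ?thesis using t e p by (intro exI[of _ "t*n1"] exI[of _ "t*n2"] exI[of _ "t*n3"]) simp
  next
    case False
    define N1 where "N1 = -(a1*(y2*z3 - z2*y3) + a2*(y3*z1 - z3*y1) + a3*(y1*z2 - z1*y2))"
    define N2 where "N2 = -(a1*(z2*x3 - x2*z3) + a2*(z3*x1 - x3*z1) + a3*(z1*x2 - x1*z2))"
    define N3 where "N3 = -(a1*(x2*y3 - y2*x3) + a2*(x3*y1 - y3*x1) + a3*(x1*y2 - y1*x2))"
    have d1: "N1*x1+N2*y1+N3*z1 = -a1*D" unfolding N1_def N2_def N3_def D_def by algebra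
    have d2: "N1*x2+N2*y2+N3*z2 = -a2*D" unfolding N1_def N2_def N3_def D_def by algebra
    have d3: "N1*x3+N2*y3+N3*z3 = -a3*D" unfolding N1_def N2_def N3_def D_def by algebra
    define Y1 where "Y1 = N1/D"
    define Y2 where "Y2 = N2/D"
    define Y3 where "Y3 = N3/D"
    have e1: "Y1*x1+Y2*y1+Y3*z1 = -a1" using d1 False unfolding Y1_def Y2_def Y3_def
      by (simp add: field_simps)
    have e2: "Y1*x2+Y2*y2+Y3*z2 = -a2" using d2 False unfolding Y1_def Y2_def Y3_def
      by (simp add: field_simps)
    have e3: "Y1*x3+Y2*y3+Y3*z3 = -a3" using d3 False unfolding Y1_def Y2_def Y3_def
      by (simp add: field_simps)
    have e4: "Y1*x4+Y2*y4+Y3*z4 = 1 - a4"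
    proof -
      have "Y1*x4+Y2*y4+Y3*z4 = -((Y1*x1+Y2*y1+Y3*z1) + (Y1*x2+Y2*y2+Y3*z2) + (Y1*x3+Y2*y3+Y3*z3))"
        unfolding w4 by algebra
      then show ?thesis using e1 e2 e3 s(1) by linarith
    qed
    have cs: "(1-a4)^2 \<le> (Y1^2+Y2^2+Y3^2)*a4^2"
    proof -
      have "(1-a4)^2 \<le> (Y1^2+Y2^2+Y3^2)*(x4^2+y4^2+z4^2)" using cs3[of Y1 x4 Y2 y4 Y3 z4] e4 by simp
      also have "\<dots> \<le> (Y1^2+Y2^2+Y3^2)*a4^2" using n(4) by (intro mult_left_mono) auto
      finally show ?thesis .
    qed
    have a4p: "a4 > 0"
    proof (rule ccontr)
      assume "\<not> a4 > 0"
      then have "a4 = 0" using p by simp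
      then show False using cs by simp
    qed
    have "9*a4^2 \<le> (1-a4)^2" using sm p by (intro power_mono[of "3*a4" "1-a4" 2, simplified power_mult_distrib, simplified]) auto
    then have "9*a4^2 \<le> (Y1^2+Y2^2+Y3^2)*a4^2" using cs by linarith
    then have "9 \<le> Y1^2+Y2^2+Y3^2" using a4p by simp
    then show ?thesis using e1 e2 e3 e4 by (intro exI[of _ Y1] exI[of _ Y2] exI[of _ Y3]) simp
  qed
qed


lemma core2:
  fixes a1 a2 a3 x1 z1 x2 z2 x3 z3 :: real
  assumes s: "a1+a2+a3 = 1" "x1+x2+x3 = 0" "z1+z2+z3 = 0"
    and n: "x1^2+z1^2 \<le> a1^2" "x2^2+z2^2 \<le> a2^2" "x3^2+z3^2 \<le> a3^2"
    and p: "a1 \<ge> 0" "a2 \<ge> 0" "a3 \<ge> 0" and sm: "a3 \<le> 1/3"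
  shows "\<exists>Y1 Y3. Y1^2+Y3^2 \<ge> 4 \<and> a1 + Y1*x1+Y3*z1 \<ge> 0 \<and> a2 + Y1*x2+Y3*z2 \<ge> 0
     \<and> a3 + Y1*x3+Y3*z3 \<ge> 0"
proof -
  have w3: "x3 = -(x1+x2)" "z3 = -(z1+z2)" using s by linarith+
  define D where "D = x1*z2 - z1*x2"
  show ?thesis
  proof (cases "D = 0")
    case True
    have "\<exists>n1 n3. n1^2 + n3^2 > 0 \<and> n1*x1+n3*z1 = 0 \<and> n1*x2+n3*z2 = 0"
    proof (cases "x1 \<noteq> 0 \<or> z1 \<noteq> 0")
      case True
      have "(-z1)^2 + x1^2 > 0" using True by (metis add_pos_nonneg add_nonneg_pos zero_le_power2 zero_less_power2 neg_0_equal_iff_equal)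
      moreover have "(-z1)*x1+x1*z1 = 0" by algebra
      moreover have "(-z1)*x2+x1*z2 = 0" using \<open>D = 0\<close> unfolding D_def by algebra
      ultimately show ?thesis by blast
    next
      case F: False
      show ?thesis
      proof (cases "x2 \<noteq> 0 \<or> z2 \<noteq> 0")
        case True
        have "(-z2)^2 + x2^2 > 0" using True by (metis add_pos_nonneg add_nonneg_pos zero_le_power2 zero_less_power2 neg_0_equal_iff_equal)
        moreover have "(-z2)*x1+x2*z1 = 0" "(-z2)*x2+x2*z2 = 0" using F by auto
        ultimately show ?thesis by blast
      next
        case False
        then show ?thesis using F by (intro exI[of _ 1] exI[of _ 0]) auto
      qed
    qed
    then obtain n1 n3 where nn: "n1^2+n3^2 > 0" "n1*x1+n3*z1 = 0" "n1*x2+n3*z2 = 0" by blast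
    obtain t where t: "(t*n1)^2+(t*0)^2+(t*n3)^2 \<ge> 4" using scale_big[of n1 0 n3 4] nn(1) by auto
    have e1: "(t*n1)*x1+(t*n3)*z1 = 0" using nn(2) by algebra
    have e2: "(t*n1)*x2+(t*n3)*z2 = 0" using nn(3) by algebra
    have e3: "(t*n1)*x3+(t*n3)*z3 = 0" using nn(2-3) w3 by algebra
    show ?thesis using t e1 e2 e3 p by (intro exI[of _ "t*n1"] exI[of _ "t*n3"]) simp
  next
    case False
    define Y1 where "Y1 = (a2*z1 - a1*z2)/D"
    define Y3 where "Y3 = (a1*x2 - a2*x1)/D"
    have d1: "(a2*z1 - a1*z2)*x1 + (a1*x2 - a2*x1)*z1 = -a1*D" unfolding D_def by algebra
    have d2: "(a2*z1 - a1*z2)*x2 + (a1*x2 - a2*x1)*z2 = -a2*D" unfolding D_def by algebra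
    have e1: "Y1*x1+Y3*z1 = -a1"
    proof -
      have "Y1*x1+Y3*z1 = ((a2*z1 - a1*z2)*x1 + (a1*x2 - a2*x1)*z1)/D" unfolding Y1_def Y3_def by (simp add: add_divide_distrib)
      then show ?thesis unfolding d1 using False by simp
    qed
    have e2: "Y1*x2+Y3*z2 = -a2"
    proof -
      have "Y1*x2+Y3*z2 = ((a2*z1 - a1*z2)*x2 + (a1*x2 - a2*x1)*z2)/D" unfolding Y1_def Y3_def by (simp add: add_divide_distrib)
      then show ?thesis unfolding d2 using False by simp
    qed
    have e3: "Y1*x3+Y3*z3 = 1 - a3"
    proof -
      have "Y1*x3+Y3*z3 = -((Y1*x1+Y3*z1) + (Y1*x2+Y3*z2))" unfolding w3 by algebra
      then show ?thesis using e1 e2 s(1) by linarith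
    qed
    have cs: "(1-a3)^2 \<le> (Y1^2+0^2+Y3^2)*a3^2"
    proof -
      have "(1-a3)^2 \<le> (Y1^2+0^2+Y3^2)*(x3^2+0^2+z3^2)" using cs3[of Y1 x3 0 0 Y3 z3] e3 by simp
      also have "\<dots> \<le> (Y1^2+0^2+Y3^2)*a3^2" using n(3) by (intro mult_left_mono) auto
      finally show ?thesis .
    qed
    have a3p: "a3 > 0"
    proof (rule ccontr)
      assume "\<not> a3 > 0"
      then have "a3 = 0" using p by simp
      then show False using cs by simp
    qed
    have "(2*a3)^2 \<le> (1-a3)^2" using sm p by (intro power_mono) auto
    then have "4*a3^2 \<le> (Y1^2+Y3^2)*a3^2" using cs by (simp add: power_mult_distrib)
    then have "4 \<le> Y1^2+Y3^2" using a3p by simp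
    then show ?thesis using e1 e2 e3 by (intro exI[of _ Y1] exI[of _ Y3]) simp
  qed
qed


definition qa :: "qop \<Rightarrow> real" where "qa A = Re (A$1$1 + A$2$2) / 2"
definition qx :: "qop \<Rightarrow> real" where "qx A = Re (A$1$2)"
definition qy :: "qop \<Rightarrow> real" where "qy A = - Im (A$1$2)"
definition qz :: "qop \<Rightarrow> real" where "qz A = Re (A$1$1 - A$2$2) / 2"

lemma ent_sum: "(sum f S :: qop)$j$k = (\<Sum>i\<in>S. f i $j$k)"
  by (simp add: sum_component)

lemma lin_q:
  "qa (\<Sum>i\<in>S. c i *\<^sub>R A i) = (\<Sum>i\<in>S. c i * qa (A i))"
  "qx (\<Sum>i\<in>S. c i *\<^sub>R A i) = (\<Sum>i\<in>S. c i * qx (A i))"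
  "qy (\<Sum>i\<in>S. c i *\<^sub>R A i) = (\<Sum>i\<in>S. c i * qy (A i))"
  "qz (\<Sum>i\<in>S. c i *\<^sub>R A i) = (\<Sum>i\<in>S. c i * qz (A i))"
  unfolding qa_def qx_def qy_def qz_def ent_sum
  by (simp_all add: Re_sum Im_sum sum_divide_distrib sum.distrib sum_subtractf algebra_simps sum_distrib_left sum_negf flip: sum_divide_distrib)

lemma lin_q1:
  "qa (\<Sum>i\<in>S. A i) = (\<Sum>i\<in>S. qa (A i))"
  "qx (\<Sum>i\<in>S. A i) = (\<Sum>i\<in>S. qx (A i))"
  "qy (\<Sum>i\<in>S. A i) = (\<Sum>i\<in>S. qy (A i))"
  "qz (\<Sum>i\<in>S. A i) = (\<Sum>i\<in>S. qz (A i))"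
  using lin_q[of "\<lambda>_. 1" A S] by simp_all

lemma q_mat1: "qa (mat 1) = 1" "qx (mat 1) = 0" "qy (mat 1) = 0" "qz (mat 1) = 0"
  by (simp_all add: qa_def qx_def qy_def qz_def mat1_ent)

lemma q_noisy: "qa (noisy_meas r True v) = 1/2" "qx (noisy_meas r True v) = r * v$1 / 2"
  "qy (noisy_meas r True v) = r * v$2 / 2" "qz (noisy_meas r True v) = r * v$3 / 2"
  by (simp_all add: qa_def qx_def qy_def qz_def noisy_meas_def mat1_ent pd_ent field_simps)

lemma psd_bound: assumes "psd A" shows "qa A \<ge> 0" "(qx A)^2 + (qy A)^2 + (qz A)^2 \<le> (qa A)^2"
proof -
  note h = psd_props[OF assms]
  show "qa A \<ge> 0" unfolding qa_def using h by simp
  have e: "\<And>a d::real. ((a+d)/2)^2 - ((a-d)/2)^2 = a*d" by (simp add: field_simps power2_eq_square)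
  have "(qa A)^2 - (qz A)^2 = Re (A$1$1) * Re (A$2$2)" unfolding qa_def qz_def
    using e[of "Re (A$1$1)" "Re (A$2$2)"] by simp
  then show "(qx A)^2 + (qy A)^2 + (qz A)^2 \<le> (qa A)^2" using h(6) unfolding qx_def qy_def by simp
qed

lemma cert:
  fixes q a x y z :: "'i \<Rightarrow> real" and Y1 Y2 Y3 r u1 u2 u3 :: real
  assumes "finite I" "\<forall>i\<in>I. 0 \<le> q i \<and> q i \<le> 1" "\<forall>i\<in>I. a i + Y1*x i + Y2*y i + Y3*z i \<ge> 0"
    "sum a I = 1" "sum x I = 0" "sum y I = 0" "sum z I = 0"
    "(\<Sum>i\<in>I. q i * a i) = 1/2" "(\<Sum>i\<in>I. q i * x i) = r*u1/2" "(\<Sum>i\<in>I. q i * y i) = r*u2/2"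
    "(\<Sum>i\<in>I. q i * z i) = r*u3/2"
  shows "r*(Y1*u1+Y2*u2+Y3*u3) \<le> 1"
proof -
  have "0 \<le> (\<Sum>i\<in>I. (1 - q i) * (a i + Y1*x i + Y2*y i + Y3*z i))"
    using assms(2,3) by (intro sum_nonneg) auto
  also have "\<dots> = (\<Sum>i\<in>I. a i) + Y1 * (\<Sum>i\<in>I. x i) + Y2 * (\<Sum>i\<in>I. y i) + Y3 * (\<Sum>i\<in>I. z i)
     - ((\<Sum>i\<in>I. q i * a i) + Y1 * (\<Sum>i\<in>I. q i * x i) + Y2 * (\<Sum>i\<in>I. q i * y i) + Y3 * (\<Sum>i\<in>I. q i * z i))"
    by (simp add: sum.distrib sum_subtractf sum_distrib_left algebra_simps)
  also have "\<dots> = 1/2 - r*(Y1*u1+Y2*u2+Y3*u3)/2" using assms(4-11) by (simp add: algebra_simps)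
  finally show ?thesis by simp
qed

lemma sum4: "sum f {..<4::nat} = f 0 + f 1 + f 2 + f 3"
  by (simp add: numeral_eq_Suc)
lemma sum3: "sum f {..<3::nat} = f 0 + f 1 + f 2"
  by (simp add: numeral_eq_Suc)

lemma norm3: "norm (vector [a,b,c] :: real^3) = sqrt (a^2+b^2+c^2)"
  by (simp add: norm_eq_sqrt_inner inner_vec_def sum_3 power2_eq_square)



lemma sim_extract:
  assumes "simulates n P (UNIV::bool set) X (noisy_meas r)" "v \<in> X"
  shows "\<exists>q. (\<forall>i<n. 0 \<le> q i \<and> q i \<le> 1) \<and> noisy_meas r True v = (\<Sum>i<n. q i *\<^sub>R P i)"
proof -
  obtain p :: "bool \<Rightarrow> real^3 \<Rightarrow> nat \<Rightarrow> real" where p: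
    "\<forall>x\<in>X. \<forall>i<n. (\<forall>a\<in>UNIV. p a x i \<ge> 0) \<and> (\<Sum>a\<in>UNIV. p a x i) = 1"
    "\<forall>x\<in>X. \<forall>a\<in>UNIV. noisy_meas r a x = (\<Sum>i<n. p a x i *\<^sub>R P i)"
    using assms(1) unfolding simulates_def by blast
  have "\<forall>i<n. 0 \<le> p True v i \<and> p True v i \<le> 1"
  proof (intro allI impI)
    fix i assume "i < n"
    then have "p True v i \<ge> 0" "p False v i \<ge> 0" "p False v i + p True v i = 1"
      using p(1) assms(2) by (auto simp: UNIV_bool)
    then show "0 \<le> p True v i \<and> p True v i \<le> 1" by linarith
  qed
  then show ?thesis using p(2) assms(2) by blast
qed

lemma povm_extract:
  assumes "povm n P"
  shows "\<forall>i<n. qa (P i) \<ge> 0 \<and> (qx (P i))^2 + (qy (P i))^2 + (qz (P i))^2 \<le> (qa (P i))^2"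
    "(\<Sum>i<n. qa (P i)) = 1" "(\<Sum>i<n. qx (P i)) = 0" "(\<Sum>i<n. qy (P i)) = 0" "(\<Sum>i<n. qz (P i)) = 0"
proof -
  have ps: "\<forall>i<n. psd (P i)" and s: "(\<Sum>i<n. P i) = mat 1" using assms unfolding povm_def by auto
  show "\<forall>i<n. qa (P i) \<ge> 0 \<and> (qx (P i))^2 + (qy (P i))^2 + (qz (P i))^2 \<le> (qa (P i))^2"
    using ps psd_bound by blast
  show "(\<Sum>i<n. qa (P i)) = 1" "(\<Sum>i<n. qx (P i)) = 0" "(\<Sum>i<n. qy (P i)) = 0" "(\<Sum>i<n. qz (P i)) = 0"
    using arg_cong[OF s, of qa] arg_cong[OF s, of qx] arg_cong[OF s, of qy] arg_cong[OF s, of qz]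
    by (simp_all add: lin_q1 q_mat1)
qed

lemma ub4:
  assumes povm: "povm 4 P" and sim: "simulates 4 P (UNIV::bool set) all_dirs (noisy_meas r)"
  shows "r \<le> 1/3"
proof -
  define a where "a i = qa (P i)" for i
  define x where "x i = qx (P i)" for i
  define y where "y i = qy (P i)" for i
  define z where "z i = qz (P i)" for i
  note pe = povm_extract[OF povm, folded a_def x_def y_def z_def]
  have b: "\<And>i. i < 4 \<Longrightarrow> a i \<ge> 0 \<and> (x i)^2 + (y i)^2 + (z i)^2 \<le> (a i)^2" using pe(1) by blast
  have s: "a 0 + a 1 + a 2 + a 3 = 1" "x 0 + x 1 + x 2 + x 3 = 0" "y 0 + y 1 + y 2 + y 3 = 0" "z 0 + z 1 + z 2 + z 3 = 0"
    using pe(2-5) unfolding sum4 by auto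
  have b0: "a 0 \<ge> 0" "(x 0)^2 + (y 0)^2 + (z 0)^2 \<le> (a 0)^2" using b[of 0] by auto
  have b1: "a 1 \<ge> 0" "(x 1)^2 + (y 1)^2 + (z 1)^2 \<le> (a 1)^2" using b[of 1] by auto
  have b2: "a 2 \<ge> 0" "(x 2)^2 + (y 2)^2 + (z 2)^2 \<le> (a 2)^2" using b[of 2] by auto
  have b3: "a 3 \<ge> 0" "(x 3)^2 + (y 3)^2 + (z 3)^2 \<le> (a 3)^2" using b[of 3] by auto
  let ?C = "\<lambda>Y1 Y2 Y3 i. a i + Y1 * x i + Y2 * y i + Y3 * z i \<ge> 0"
  have "\<exists>Y1 Y2 Y3. Y1^2+Y2^2+Y3^2 \<ge> 9 \<and> ?C Y1 Y2 Y3 0 \<and> ?C Y1 Y2 Y3 1 \<and> ?C Y1 Y2 Y3 2 \<and> ?C Y1 Y2 Y3 3"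
  proof -
    consider "a 0 \<le> 1/4" | "a 1 \<le> 1/4" | "a 2 \<le> 1/4" | "a 3 \<le> 1/4" using s(1) by linarith
    then show ?thesis
    proof cases
      case 1
      show ?thesis using core3[of "a 1" "a 2" "a 3" "a 0" "x 1" "x 2" "x 3" "x 0" "y 1" "y 2" "y 3" "y 0" "z 1" "z 2" "z 3" "z 0"]
        s b0 b1 b2 b3 1 by (simp add: algebra_simps; metis)
    next
      case 2
      show ?thesis using core3[of "a 0" "a 2" "a 3" "a 1" "x 0" "x 2" "x 3" "x 1" "y 0" "y 2" "y 3" "y 1" "z 0" "z 2" "z 3" "z 1"]
        s b0 b1 b2 b3 2 by (simp add: algebra_simps; metis)
    next
      case 3
      show ?thesis using core3[of "a 0" "a 1" "a 3" "a 2" "x 0" "x 1" "x 3" "x 2" "y 0" "y 1" "y 3" "y 2" "z 0" "z 1" "z 3" "z 2"]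
        s b0 b1 b2 b3 3 by (simp add: algebra_simps; metis)
    next
      case 4
      show ?thesis using core3[of "a 0" "a 1" "a 2" "a 3" "x 0" "x 1" "x 2" "x 3" "y 0" "y 1" "y 2" "y 3" "z 0" "z 1" "z 2" "z 3"]
        s b0 b1 b2 b3 4 by (simp add: algebra_simps; metis)
    qed
  qed
  then obtain Y1 Y2 Y3 where Y: "Y1^2+Y2^2+Y3^2 \<ge> 9" "?C Y1 Y2 Y3 0" "?C Y1 Y2 Y3 1" "?C Y1 Y2 Y3 2" "?C Y1 Y2 Y3 3"
    by blast
  define S where "S = sqrt (Y1^2+Y2^2+Y3^2)"
  have S3: "S \<ge> 3" unfolding S_def using Y(1) real_sqrt_le_mono[of 9 "Y1^2+Y2^2+Y3^2"] by simp
  have SS: "S^2 = Y1^2+Y2^2+Y3^2" unfolding S_def using Y(1) by simp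
  define v where "v = (vector [Y1/S, Y2/S, Y3/S] :: real^3)"
  have "norm v = 1" unfolding v_def norm3 using SS S3 Y(1)
    by (simp add: power_divide add_divide_distrib[symmetric])
  then have vd: "v \<in> all_dirs" unfolding all_dirs_def by simp
  obtain q where q: "\<forall>i<4. 0 \<le> q i \<and> q i \<le> 1" "noisy_meas r True v = (\<Sum>i<4. q i *\<^sub>R P i)"
    using sim_extract[OF sim vd] by blast
  have e: "(\<Sum>i<4. q i * a i) = 1/2" "(\<Sum>i<4. q i * x i) = r*(Y1/S)/2"
     "(\<Sum>i<4. q i * y i) = r*(Y2/S)/2" "(\<Sum>i<4. q i * z i) = r*(Y3/S)/2"
    using arg_cong[OF q(2), of qa] arg_cong[OF q(2), of qx] arg_cong[OF q(2), of qy] arg_cong[OF q(2), of qz]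
    unfolding lin_q q_noisy a_def x_def y_def z_def v_def by simp_all
  have C: "\<forall>i\<in>{..<4}. a i + Y1*x i + Y2*y i + Y3*z i \<ge> 0"
    using Y(2-5) by (auto simp: less_Suc_eq numeral_eq_Suc)
  have "r*(Y1*(Y1/S)+Y2*(Y2/S)+Y3*(Y3/S)) \<le> 1"
    by (rule cert[of "{..<4}" q a Y1 x Y2 y Y3 z]) (use q(1) C pe e in auto)
  moreover have "Y1*(Y1/S)+Y2*(Y2/S)+Y3*(Y3/S) = S" using SS S3
    by (simp add: add_divide_distrib[symmetric] power2_eq_square field_simps)
  ultimately have "r * S \<le> 1" by simp
  show ?thesis
  proof (rule ccontr)
    assume "\<not> r \<le> 1/3"
    then have "r > 1/3" by simp
    then have "r*3 \<le> r*S" using S3 by (intro mult_left_mono) auto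
    then show False using \<open>r * S \<le> 1\<close> \<open>r > 1/3\<close> by linarith
  qed
qed



lemma ub3:
  assumes povm: "povm 3 P" and sim: "simulates 3 P (UNIV::bool set) planar_dirs (noisy_meas r)"
  shows "r \<le> 1/2"
proof -
  define a where "a i = qa (P i)" for i
  define x where "x i = qx (P i)" for i
  define y where "y i = qy (P i)" for i
  define z where "z i = qz (P i)" for i
  note pe = povm_extract[OF povm, folded a_def x_def y_def z_def]
  have b: "\<And>i. i < 3 \<Longrightarrow> a i \<ge> 0 \<and> (x i)^2 + (z i)^2 \<le> (a i)^2"
  proof -
    fix i assume "i < (3::nat)"
    then have "a i \<ge> 0 \<and> (x i)^2 + (y i)^2 + (z i)^2 \<le> (a i)^2" using pe(1) by blast
    moreover have "(y i)^2 \<ge> 0" by simp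
    ultimately show "a i \<ge> 0 \<and> (x i)^2 + (z i)^2 \<le> (a i)^2" by linarith
  qed
  have s: "a 0 + a 1 + a 2 = 1" "x 0 + x 1 + x 2 = 0" "z 0 + z 1 + z 2 = 0"
    using pe(2,3,5) unfolding sum3 by auto
  have b0: "a 0 \<ge> 0" "(x 0)^2 + (z 0)^2 \<le> (a 0)^2" using b[of 0] by auto
  have b1: "a 1 \<ge> 0" "(x 1)^2 + (z 1)^2 \<le> (a 1)^2" using b[of 1] by auto
  have b2: "a 2 \<ge> 0" "(x 2)^2 + (z 2)^2 \<le> (a 2)^2" using b[of 2] by auto
  let ?C = "\<lambda>Y1 Y3 i. a i + Y1 * x i + Y3 * z i \<ge> 0"
  have "\<exists>Y1 Y3. Y1^2+Y3^2 \<ge> 4 \<and> ?C Y1 Y3 0 \<and> ?C Y1 Y3 1 \<and> ?C Y1 Y3 2"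
  proof -
    consider "a 0 \<le> 1/3" | "a 1 \<le> 1/3" | "a 2 \<le> 1/3" using s(1) by linarith
    then show ?thesis
    proof cases
      case 1
      show ?thesis using core2[of "a 1" "a 2" "a 0" "x 1" "x 2" "x 0" "z 1" "z 2" "z 0"]
        s b0 b1 b2 1 by (simp add: algebra_simps; metis)
    next
      case 2
      show ?thesis using core2[of "a 0" "a 2" "a 1" "x 0" "x 2" "x 1" "z 0" "z 2" "z 1"]
        s b0 b1 b2 2 by (simp add: algebra_simps; metis)
    next
      case 3
      show ?thesis using core2[of "a 0" "a 1" "a 2" "x 0" "x 1" "x 2" "z 0" "z 1" "z 2"]
        s b0 b1 b2 3 by (simp add: algebra_simps; metis)
    qed
  qed
  then obtain Y1 Y3 where Y: "Y1^2+Y3^2 \<ge> 4" "?C Y1 Y3 0" "?C Y1 Y3 1" "?C Y1 Y3 2"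
    by blast
  define S where "S = sqrt (Y1^2+Y3^2)"
  have S2: "S \<ge> 2" unfolding S_def using Y(1) real_sqrt_le_mono[of 4 "Y1^2+Y3^2"] by simp
  have SS: "S^2 = Y1^2+Y3^2" unfolding S_def using Y(1) by simp
  define v where "v = (vector [Y1/S, 0, Y3/S] :: real^3)"
  have nz: "Y1^2 + Y3^2 \<noteq> 0" using Y(1) by linarith
  have "norm v = 1" unfolding v_def norm3 using SS S2 nz
    by (simp add: power_divide add_divide_distrib[symmetric] del: sum_power2_eq_zero_iff)
  moreover have "v$2 = 0" unfolding v_def by simp
  ultimately have vd: "v \<in> planar_dirs" unfolding planar_dirs_def by simp
  obtain q where q: "\<forall>i<3. 0 \<le> q i \<and> q i \<le> 1" "noisy_meas r True v = (\<Sum>i<3. q i *\<^sub>R P i)"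
    using sim_extract[OF sim vd] by blast
  have e: "(\<Sum>i<3. q i * a i) = 1/2" "(\<Sum>i<3. q i * x i) = r*(Y1/S)/2"
     "(\<Sum>i<3. q i * y i) = r*0/2" "(\<Sum>i<3. q i * z i) = r*(Y3/S)/2"
    using arg_cong[OF q(2), of qa] arg_cong[OF q(2), of qx] arg_cong[OF q(2), of qy] arg_cong[OF q(2), of qz]
    unfolding lin_q q_noisy a_def x_def y_def z_def v_def by simp_all
  have C: "\<forall>i\<in>{..<3}. a i + Y1*x i + 0*y i + Y3*z i \<ge> 0"
    using Y(2-4) by (auto simp: less_Suc_eq numeral_eq_Suc)
  have "r*(Y1*(Y1/S)+0*0+Y3*(Y3/S)) \<le> 1"
    by (rule cert[of "{..<3}" q a Y1 x 0 y Y3 z]) (use q(1) C pe e in auto)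
  moreover have "Y1*(Y1/S)+0*0+Y3*(Y3/S) = S" using SS S2
    by (simp add: add_divide_distrib[symmetric] power2_eq_square field_simps)
  ultimately have "r * S \<le> 1" by simp
  show ?thesis
  proof (rule ccontr)
    assume "\<not> r \<le> 1/2"
    then have "r > 1/2" by simp
    then have "r*2 \<le> r*S" using S2 by (intro mult_left_mono) auto
    then show False using \<open>r * S \<le> 1\<close> \<open>r > 1/2\<close> by linarith
  qed
qed



lemma psd_bloch:
  assumes "c \<ge> 0" "(m$1)^2 + (m$2)^2 + (m$3)^2 \<le> 1"
  shows "psd (c *\<^sub>R (mat 1 + pauli_dot m))"
proof (rule psd_herm[where a = "c*(1 + m$3)" and d = "c*(1 - m$3)"])
  have m3: "(m$3)^2 \<le> 1" using assms(2) by (smt (verit) zero_le_power2)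
  then have "\<bar>m$3\<bar> \<le> 1" using abs_le_square_iff[of "m$3" 1] by simp
  then show "c*(1 + m$3) \<ge> 0" "c*(1 - m$3) \<ge> 0" using assms(1) by auto
  show "(c *\<^sub>R (mat 1 + pauli_dot m))$1$1 = of_real (c*(1 + m$3))"
    "(c *\<^sub>R (mat 1 + pauli_dot m))$2$2 = of_real (c*(1 - m$3))"
    "(c *\<^sub>R (mat 1 + pauli_dot m))$2$1 = cnj ((c *\<^sub>R (mat 1 + pauli_dot m))$1$2)"
    by (simp_all add: pd_ent mat1_ent complex_eq_iff)
  have "(Re ((c *\<^sub>R (mat 1 + pauli_dot m))$1$2))^2 + (Im ((c *\<^sub>R (mat 1 + pauli_dot m))$1$2))^2
     = c^2 * ((m$1)^2 + (m$2)^2)" by (simp add: pd_ent mat1_ent power_mult_distrib algebra_simps)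
  also have "\<dots> \<le> c^2 * (1 - (m$3)^2)" using assms(2) by (intro mult_left_mono) auto
  also have "\<dots> = c*(1 + m$3) * (c*(1 - m$3))" by (simp add: power2_eq_square algebra_simps)
  finally show "(Re ((c *\<^sub>R (mat 1 + pauli_dot m))$1$2))^2 + (Im ((c *\<^sub>R (mat 1 + pauli_dot m))$1$2))^2
     \<le> c*(1 + m$3) * (c*(1 - m$3))" .
qed

definition hh :: real where "hh = 1 / sqrt 3"
lemma hh2: "hh * hh = 1/3" unfolding hh_def by (simp add: real_divide_square_eq)

definition m4 :: "nat \<Rightarrow> real^3" where
  "m4 i = (if i = 0 then vector [hh,hh,hh] else if i = 1 then vector [hh,-hh,-hh]
           else if i = 2 then vector [-hh,hh,-hh] else vector [-hh,-hh,hh])"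
definition P4 :: "nat \<Rightarrow> qop" where "P4 i = (1/4::real) *\<^sub>R (mat 1 + pauli_dot (m4 i))"

lemma m4_norm: "(m4 i$1)^2 + (m4 i$2)^2 + (m4 i$3)^2 = 1"
  unfolding m4_def using hh2 by (simp add: power2_eq_square)

lemma povm_P4: "povm 4 P4"
  unfolding povm_def
proof
  show "\<forall>i<4. psd (P4 i)" unfolding P4_def using psd_bloch m4_norm by simp
  show "(\<Sum>i<4. P4 i) = mat 1"
    unfolding qop_eq ent_sum sum4 P4_def m4_def by (simp add: pd_ent mat1_ent complex_eq_iff field_simps)
qed



lemma m4_inner: "m4 i \<bullet> v = (m4 i$1) * v$1 + (m4 i$2) * v$2 + (m4 i$3) * v$3"
  by (simp add: inner_vec_def sum_3)

lemma hh2': "hh * (hh * x) = x/3" using hh2 by (metis mult.assoc mult.commute times_divide_eq_right mult_1)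

lemma sim4_eq: "noisy_meas (1/3) a v = (\<Sum>i<4. (if a then (1 + m4 i \<bullet> v)/2 else (1 - m4 i \<bullet> v)/2) *\<^sub>R P4 i)"
  unfolding qop_eq ent_sum sum4 P4_def noisy_meas_def m4_inner
  apply (cases a)
  apply (simp_all add: m4_def pd_ent mat1_ent complex_eq_iff)
  apply (simp_all add: algebra_simps hh2 hh2')
  by (auto simp: field_simps)
lemma norm3': "norm (x :: real^3) = sqrt ((x$1)^2+(x$2)^2+(x$3)^2)"
  by (simp add: norm_eq_sqrt_inner inner_vec_def sum_3 power2_eq_square)

lemma unit_inner: assumes "(m$1)^2+(m$2)^2+(m$3)^2 = 1" "norm (v::real^3) = 1"
  shows "0 \<le> (1 + m \<bullet> v)/2" "0 \<le> (1 - m \<bullet> v)/2"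
proof -
  have "norm m = 1" using assms(1) norm3' by simp
  then have "\<bar>m \<bullet> v\<bar> \<le> 1" using Cauchy_Schwarz_ineq2[of m v] assms(2) by simp
  then show "0 \<le> (1 + m \<bullet> v)/2" "0 \<le> (1 - m \<bullet> v)/2" by auto
qed

lemma sim_P4: "simulates 4 P4 UNIV all_dirs (noisy_meas (1/3))"
  unfolding simulates_def
proof (intro exI[of _ "\<lambda>a v i. if a then (1 + m4 i \<bullet> v)/2 else (1 - m4 i \<bullet> v)/2"] conjI ballI allI impI)
  fix x :: "real^3" and i :: nat and a :: bool assume "x \<in> all_dirs"
  then have "norm x = 1" unfolding all_dirs_def by simp
  then show "0 \<le> (if a then (1 + m4 i \<bullet> x)/2 else (1 - m4 i \<bullet> x)/2)"
    using unit_inner[OF m4_norm] by simp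
next
  fix x :: "real^3" and i :: nat
  show "(\<Sum>a\<in>UNIV. if a then (1 + m4 i \<bullet> x)/2 else (1 - m4 i \<bullet> x)/2) = 1"
    by (simp add: UNIV_bool field_simps)
next
  fix x :: "real^3" and a :: bool
  show "noisy_meas (1/3) a x = (\<Sum>i<4. (if a then (1 + m4 i \<bullet> x)/2 else (1 - m4 i \<bullet> x)/2) *\<^sub>R P4 i)"
    by (rule sim4_eq)
qed



definition kk :: real where "kk = sqrt 3 / 2"
lemma kk2: "kk * kk = 3/4" unfolding kk_def by (simp add: power2_eq_square[symmetric] power_divide)
lemma kk2': "kk * (kk * x) = 3*x/4" using kk2 by (metis mult.assoc times_divide_eq_left mult.commute)

definition mt :: "nat \<Rightarrow> real^3" where
  "mt i = (if i = 0 then vector [0,0,1] else if i = 1 then vector [kk,0,-1/2] else vector [-kk,0,-1/2])"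
definition P3 :: "nat \<Rightarrow> qop" where "P3 i = (1/3::real) *\<^sub>R (mat 1 + pauli_dot (mt i))"

lemma mt_norm: "(mt i$1)^2 + (mt i$2)^2 + (mt i$3)^2 = 1"
  unfolding mt_def using kk2 by (simp add: power2_eq_square)

lemma povm_P3: "povm 3 P3"
  unfolding povm_def
proof
  show "\<forall>i<3. psd (P3 i)" unfolding P3_def using psd_bloch mt_norm by simp
  show "(\<Sum>i<3. P3 i) = mat 1"
    unfolding qop_eq ent_sum sum3 P3_def mt_def by (simp add: pd_ent mat1_ent complex_eq_iff field_simps)
qed

lemma mt_inner: "mt i \<bullet> v = (mt i$1) * v$1 + (mt i$2) * v$2 + (mt i$3) * v$3"
  by (simp add: inner_vec_def sum_3)

lemma sim3_eq: "v$2 = 0 \<Longrightarrow> noisy_meas (1/2) a v = (\<Sum>i<3. (if a then (1 + mt i \<bullet> v)/2 else (1 - mt i \<bullet> v)/2) *\<^sub>R P3 i)"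
  unfolding qop_eq ent_sum sum3 P3_def noisy_meas_def mt_inner
  apply (cases a)
  apply (simp_all add: mt_def pd_ent mat1_ent complex_eq_iff)
  apply (simp_all add: algebra_simps kk2 kk2')
  by (auto simp: field_simps)

lemma sim_P3: "simulates 3 P3 UNIV planar_dirs (noisy_meas (1/2))"
  unfolding simulates_def
proof (intro exI[of _ "\<lambda>a v i. if a then (1 + mt i \<bullet> v)/2 else (1 - mt i \<bullet> v)/2"] conjI ballI allI impI)
  fix x :: "real^3" and i :: nat and a :: bool assume "x \<in> planar_dirs"
  then have "norm x = 1" unfolding planar_dirs_def by simp
  then show "0 \<le> (if a then (1 + mt i \<bullet> x)/2 else (1 - mt i \<bullet> x)/2)"
    using unit_inner[OF mt_norm] by simp
next
  fix x :: "real^3" and i :: nat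
  show "(\<Sum>a\<in>UNIV. if a then (1 + mt i \<bullet> x)/2 else (1 - mt i \<bullet> x)/2) = 1"
    by (simp add: UNIV_bool field_simps)
next
  fix x :: "real^3" and a :: bool assume "x \<in> planar_dirs"
  then have "x$2 = 0" unfolding planar_dirs_def by simp
  then show "noisy_meas (1/2) a x = (\<Sum>i<3. (if a then (1 + mt i \<bullet> x)/2 else (1 - mt i \<bullet> x)/2) *\<^sub>R P3 i)"
    by (rule sim3_eq)
qed

theorem proposition3:
  shows "Rp 3 = 1/2 \<and> R 4 = 1/3"
proof
  show "Rp 3 = 1/2" unfolding Rp_def
  proof (rule cSup_eq_maximum)
    show "1/2 \<in> {r. r \<ge> 0 \<and> (\<exists>P. povm 3 P \<and> simulates 3 P UNIV planar_dirs (noisy_meas r))}"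
      using povm_P3 sim_P3 by auto
    fix r assume "r \<in> {r. r \<ge> 0 \<and> (\<exists>P. povm 3 P \<and> simulates 3 P UNIV planar_dirs (noisy_meas r))}"
    then show "r \<le> 1/2" using ub3 by blast
  qed
  show "R 4 = 1/3" unfolding R_def
  proof (rule cSup_eq_maximum)
    show "1/3 \<in> {r. r \<ge> 0 \<and> (\<exists>P. povm 4 P \<and> simulates 4 P UNIV all_dirs (noisy_meas r))}"
      using povm_P4 sim_P4 by auto
    fix r assume "r \<in> {r. r \<ge> 0 \<and> (\<exists>P. povm 4 P \<and> simulates 4 P UNIV all_dirs (noisy_meas r))}"
    then show "r \<le> 1/3" using ub4 by blast
  qed
qed


end
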